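(* Let $d \geq 1$, let $n_1,\dots,n_d \geq 1$, and let $G_{\mathrm{base}}$ be the unweighted $d$-dimensional grid graph with vertex set $[n_1]\times\cdots\times[n_d]$ (so $L = n_1 \cdots n_d$ vertices), where two vertices are adjacent iff they differ by exactly $1$ in exactly one coordinate. Let $f:\mathbb{N} \to \mathbb{R}$ be arbitrary and define the mask $\mathbf{M}$ indexed by the vertices by $\mathbf{M}_{u,v} = f(\mathrm{dist}_{G_{\mathrm{base}}}(u,v))$, where $\mathrm{dist}_{G_{\mathrm{base}}}$ is the shortest-path distance. Then there exists an ordering of the vertices such that $\mathbf{M}$, written as an $L\times L$ matrix in this ordering, is a $d$-level block-Toeplitz matrix.
   Context: A matrix $\mathbf{M} \in \mathbb{R}^{L\times L}$ is Toeplitz (equivalently, $1$-level block-Toeplitz) if there is $\xi:\mathbb{Z}\to\mathbb{R}$ with $\mathbf{M}_{i,j} = \xi(i-j)$ for all $i,j$. For $d \geq 2$, $\mathbf{M}$ is $d$-level block-Toeplitz if $\mathbf{M} = (\mathbf{B}^{i,j})_{i,j}$ is partitioned into blocks $\mathbf{B}^{i,j}$, each taken from some finite set $\{\mathbf{A}_1,\dots,\mathbf{A}_r\}$ of $(d-1)$-level block-Toeplitz matrices, such that replacing each block $\mathbf{B}^{i,j}$ by the index $k$ of its matrix $\mathbf{A}_k$ yields a Toeplitz matrix. *)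

theory Defs
  imports Complex_Main
begin

text \<open>Vertices of the grid [n_1] x ... x [n_d] are represented as lists of length d
  with coordinates 0-based: v ! i < ns ! i.\<close>

definition grid_vertices :: "nat list \<Rightarrow> nat list set" where
  "grid_vertices ns = {v. length v = length ns \<and> (\<forall>i<length ns. v ! i < ns ! i)}"

definition grid_adj :: "nat list \<Rightarrow> nat list \<Rightarrow> nat list \<Rightarrow> bool" where
  "grid_adj ns u v \<longleftrightarrow> u \<in> grid_vertices ns \<and> v \<in> grid_vertices ns \<and>
     (\<exists>i<length ns. (u ! i = v ! i + 1 \<or> v ! i = u ! i + 1) \<and>
        (\<forall>j<length ns. j \<noteq> i \<longrightarrow> u ! j = v ! j))"

definition grid_walk :: "nat list \<Rightarrow> nat list list \<Rightarrow> nat list \<Rightarrow> nat list \<Rightarrow> bool" where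
  "grid_walk ns p u v \<longleftrightarrow> p \<noteq> [] \<and> hd p = u \<and> last p = v \<and>
     set p \<subseteq> grid_vertices ns \<and> (\<forall>i. Suc i < length p \<longrightarrow> grid_adj ns (p ! i) (p ! Suc i))"

definition grid_dist :: "nat list \<Rightarrow> nat list \<Rightarrow> nat list \<Rightarrow> nat" where
  "grid_dist ns u v = (LEAST k. \<exists>p. grid_walk ns p u v \<and> length p = Suc k)"

definition toeplitz :: "nat \<Rightarrow> (nat \<Rightarrow> nat \<Rightarrow> 'a) \<Rightarrow> bool" where
  "toeplitz N M \<longleftrightarrow> (\<exists>\<xi> :: int \<Rightarrow> 'a. \<forall>i<N. \<forall>j<N. M i j = \<xi> (int i - int j))"

fun block_toeplitz :: "nat \<Rightarrow> nat \<Rightarrow> (nat \<Rightarrow> nat \<Rightarrow> real) \<Rightarrow> bool" where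
  "block_toeplitz 0 N M = False"
| "block_toeplitz (Suc 0) N M = toeplitz N M"
| "block_toeplitz (Suc (Suc d)) N M =
     (\<exists>m s r (A :: nat \<Rightarrow> nat \<Rightarrow> nat \<Rightarrow> real) (idx :: nat \<Rightarrow> nat \<Rightarrow> nat).
        N = m * s \<and>
        (\<forall>k<r. block_toeplitz (Suc d) s (A k)) \<and>
        (\<forall>a<m. \<forall>b<m. idx a b < r \<and>
           (\<forall>i<s. \<forall>j<s. M (a * s + i) (b * s + j) = A (idx a b) i j)) \<and>
        toeplitz m idx)"

end

theory Submission
  imports Defs
begin

fun sig :: "nat list \<Rightarrow> nat \<Rightarrow> nat list" where
  "sig [] x = []"
| "sig (n # ns) x = (x div prod_list ns) # sig ns (x mod prod_list ns)"

definition ad :: "nat \<Rightarrow> nat \<Rightarrow> nat" where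
  "ad a b = (a - b) + (b - a)"

definition l1 :: "nat list \<Rightarrow> nat list \<Rightarrow> nat list \<Rightarrow> nat" where
  "l1 ns u v = (\<Sum>i<length ns. ad (u ! i) (v ! i))"

lemma grid_vertices_Nil: "grid_vertices [] = {[]}"
  by (auto simp: grid_vertices_def)

lemma grid_vertices_Cons:
  "grid_vertices (n # ns) = {a # v | a v. a < n \<and> v \<in> grid_vertices ns}"
proof (intro set_eqI iffI)
  fix x assume "x \<in> grid_vertices (n # ns)"
  then have L: "length x = Suc (length ns)" and B: "\<forall>i<Suc (length ns). x ! i < (n # ns) ! i"
    by (auto simp: grid_vertices_def)
  from L obtain a v where x: "x = a # v" and lv: "length v = length ns"
    by (metis length_Suc_conv)
  have "a < n" using B[rule_format, of 0] x by simp
  moreover have "\<forall>i<length ns. v ! i < ns ! i"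
    using B x by auto
  ultimately show "x \<in> {a # v | a v. a < n \<and> v \<in> grid_vertices ns}"
    using x lv by (auto simp: grid_vertices_def)
next
  fix x assume "x \<in> {a # v | a v. a < n \<and> v \<in> grid_vertices ns}"
  then obtain a v where x: "x = a # v" and a: "a < n" and v: "v \<in> grid_vertices ns" by blast
  show "x \<in> grid_vertices (n # ns)"
    using a v unfolding x grid_vertices_def by (auto simp: nth_Cons split: nat.splits)
qed

lemma prod_list_pos: "\<forall>i<length ns. ns ! i \<ge> 1 \<Longrightarrow> prod_list (ns :: nat list) > 0"
proof (induction ns)
  case (Cons n ns)
  have "\<forall>i<length ns. ns ! i \<ge> 1"
  proof (intro allI impI)
    fix i assume "i < length ns"
    then show "ns ! i \<ge> 1" using Cons.prems[rule_format, of "Suc i"] by simp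
  qed
  moreover have "n \<ge> 1" using Cons.prems[rule_format, of 0] by simp
  ultimately have "n > 0" "prod_list ns > 0" using Cons.IH by auto
  then show ?case by simp
qed simp

lemma sig_bij:
  "\<forall>i<length ns. ns ! i \<ge> 1 \<Longrightarrow> bij_betw (sig ns) {..<prod_list ns} (grid_vertices ns)"
proof (induction ns)
  case Nil
  then show ?case by (auto simp: grid_vertices_Nil bij_betw_def inj_on_def)
next
  case (Cons n ns)
  have h: "\<forall>i<length ns. ns ! i \<ge> 1" using Cons.prems by auto
  have IH: "bij_betw (sig ns) {..<prod_list ns} (grid_vertices ns)" using Cons.IH h by simp
  define s where "s = prod_list ns"
  have s0: "s > 0" using prod_list_pos[OF h] s_def by simp
  show ?case unfolding bij_betw_def
  proof
    show "inj_on (sig (n # ns)) {..<prod_list (n # ns)}"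
    proof (rule inj_onI)
      fix x y assume "sig (n # ns) x = sig (n # ns) y"
      then have 1: "x div s = y div s" and 2: "sig ns (x mod s) = sig ns (y mod s)"
        by (auto simp: s_def)
      have "x mod s = y mod s"
        using IH 2 s0 unfolding bij_betw_def inj_on_def s_def[symmetric] by simp
      then show "x = y" using 1 by (metis div_mult_mod_eq)
    qed
  next
    show "sig (n # ns) ` {..<prod_list (n # ns)} = grid_vertices (n # ns)"
    proof (intro set_eqI iffI)
      fix v assume "v \<in> sig (n # ns) ` {..<prod_list (n # ns)}"
      then obtain x where x: "x < n * s" and v: "v = sig (n # ns) x" by (auto simp: s_def)
      have "x div s < n" using x by (simp add: div_less_iff_less_mult s0)
      moreover have "sig ns (x mod s) \<in> grid_vertices ns"
        using IH s0 unfolding bij_betw_def s_def[symmetric] by auto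
      ultimately show "v \<in> grid_vertices (n # ns)"
        using v by (auto simp: grid_vertices_Cons s_def)
    next
      fix v assume "v \<in> grid_vertices (n # ns)"
      then obtain a w where v: "v = a # w" and a: "a < n" and w: "w \<in> grid_vertices ns"
        by (auto simp: grid_vertices_Cons)
      obtain i where i: "i < s" and wi: "w = sig ns i"
        using IH w unfolding bij_betw_def s_def[symmetric] by auto
      have "(a * s + i) div s = a" "(a * s + i) mod s = i" using i s0 by auto
      then have "sig (n # ns) (a * s + i) = v" using v wi by (simp add: s_def)
      moreover have "a * s + i < n * s"
      proof -
        have "a * s + i < (a + 1) * s" using i by simp
        also have "\<dots> \<le> n * s" using a by (intro mult_right_mono) auto
        finally show ?thesis .
      qed
      ultimately show "v \<in> sig (n # ns) ` {..<prod_list (n # ns)}"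
        by (auto simp: s_def intro!: image_eqI[where x="a * s + i"])
    qed
  qed
qed

lemma walk_Cons:
  assumes "grid_walk ns p w v" "grid_adj ns u w"
  shows "grid_walk ns (u # p) u v"
  unfolding grid_walk_def
proof (intro conjI allI impI)
  show "last (u # p) = v" using assms(1) by (auto simp: grid_walk_def)
  show "set (u # p) \<subseteq> grid_vertices ns" using assms by (auto simp: grid_walk_def grid_adj_def)
  fix i assume "Suc i < length (u # p)"
  then show "grid_adj ns ((u # p) ! i) ((u # p) ! Suc i)"
    using assms by (cases i) (auto simp: grid_walk_def hd_conv_nth)
qed simp_all

lemma adj_l1: "grid_adj ns u w \<Longrightarrow> l1 ns u w = 1"
proof -
  assume "grid_adj ns u w"
  then obtain i where i: "i < length ns" and d: "u ! i = w ! i + 1 \<or> w ! i = u ! i + 1"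
    and o: "\<forall>j<length ns. j \<noteq> i \<longrightarrow> u ! j = w ! j"
    unfolding grid_adj_def by blast
  have "l1 ns u w = ad (u ! i) (w ! i)"
    unfolding l1_def using i o by (subst sum.remove[of _ i]) (auto simp: ad_def intro!: sum.neutral)
  then show ?thesis using d by (auto simp: ad_def)
qed

lemma l1_triangle: "l1 ns u v \<le> l1 ns u w + l1 ns w v"
  unfolding l1_def sum.distrib[symmetric] by (intro sum_mono) (auto simp: ad_def)

lemma walk_lower: "grid_walk ns p u v \<Longrightarrow> l1 ns u v < length p"
proof (induction p arbitrary: u)
  case Nil
  then show ?case by (simp add: grid_walk_def)
next
  case (Cons x p)
  show ?case
  proof (cases "p = []")
    case True
    then have "u = v" using Cons.prems by (auto simp add: grid_walk_def)
    then show ?thesis by (simp add: l1_def ad_def)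
  next
    case False
    have x: "x = u" using Cons.prems by (simp add: grid_walk_def)
    have adj: "grid_adj ns u (hd p)"
      using Cons.prems False x unfolding grid_walk_def
      by (metis One_nat_def Suc_mono hd_conv_nth length_greater_0_conv length_Cons nth_Cons_0 nth_Cons_Suc)
    have "grid_walk ns p (hd p) v"
      unfolding grid_walk_def
    proof (intro conjI allI impI)
      fix i assume "Suc i < length p"
      then have "Suc (Suc i) < length (x # p)" by simp
      then have "grid_adj ns ((x # p) ! Suc i) ((x # p) ! Suc (Suc i))"
        using Cons.prems unfolding grid_walk_def by blast
      then show "grid_adj ns (p ! i) (p ! Suc i)" by simp
    qed (use Cons.prems False in \<open>auto simp: grid_walk_def\<close>)
    then have "l1 ns (hd p) v < length p" by (rule Cons.IH)
    then show ?thesis using l1_triangle[of ns u v "hd p"] adj_l1[OF adj] by simp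
  qed
qed

lemma l1_split:
  assumes "i < length ns"
  shows "l1 ns u v = ad (u ! i) (v ! i) + (\<Sum>j\<in>{..<length ns} - {i}. ad (u ! j) (v ! j))"
  unfolding l1_def using assms by (subst sum.remove[of _ i]) auto

lemma walk_upper:
  "\<forall>u. u \<in> grid_vertices ns \<longrightarrow> v \<in> grid_vertices ns \<longrightarrow> l1 ns u v = k \<longrightarrow>
     (\<exists>p. grid_walk ns p u v \<and> length p = Suc k)"
proof (induction k)
  case 0
  show ?case
  proof (intro allI impI)
    fix u assume u: "u \<in> grid_vertices ns" and v: "v \<in> grid_vertices ns" and l: "l1 ns u v = 0"
    have "\<forall>i<length ns. ad (u ! i) (v ! i) = 0" using l unfolding l1_def by simp
    then have "u = v" using u v
      by (intro nth_equalityI) (auto simp: grid_vertices_def ad_def)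
    then show "\<exists>p. grid_walk ns p u v \<and> length p = Suc 0"
      using v by (intro exI[of _ "[u]"]) (auto simp: grid_walk_def)
  qed
next
  case (Suc k)
  show ?case
  proof (intro allI impI)
    fix u assume u: "u \<in> grid_vertices ns" and v: "v \<in> grid_vertices ns" and l: "l1 ns u v = Suc k"
    obtain i where i: "i < length ns" and ne: "ad (u ! i) (v ! i) \<noteq> 0"
      using l unfolding l1_def by (metis (no_types, lifting) lessThan_iff nat.distinct(1) sum.neutral)
    define c where "c = (if u ! i < v ! i then u ! i + 1 else u ! i - 1)"
    define w where "w = u[i := c]"
    have lu: "length u = length ns" and bu: "\<forall>j<length ns. u ! j < ns ! j"
      using u by (auto simp: grid_vertices_def)
    have lv: "length v = length ns" and bv: "\<forall>j<length ns. v ! j < ns ! j"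
      using v by (auto simp: grid_vertices_def)
    have c_lt: "c < ns ! i"
      using bu bv i ne unfolding c_def ad_def by (auto split: if_splits)
    have w: "w \<in> grid_vertices ns"
      using lu bu c_lt i unfolding w_def grid_vertices_def by (auto simp: nth_list_update)
    have adj: "grid_adj ns u w"
      unfolding grid_adj_def
      using u w i lu ne unfolding w_def c_def ad_def
      by (intro conjI exI[of _ i]) (auto simp: nth_list_update)
    have "(\<Sum>j\<in>{..<length ns} - {i}. ad (w ! j) (v ! j)) = (\<Sum>j\<in>{..<length ns} - {i}. ad (u ! j) (v ! j))"
      by (rule sum.cong) (auto simp: w_def)
    moreover have "w ! i = c" using i lu by (simp add: w_def)
    ultimately have "l1 ns w v = ad c (v ! i) + (\<Sum>j\<in>{..<length ns} - {i}. ad (u ! j) (v ! j))"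
      using l1_split[OF i, of w v] by simp
    moreover have "ad c (v ! i) + 1 = ad (u ! i) (v ! i)"
      using ne unfolding c_def ad_def by auto
    ultimately have "l1 ns w v = k" using l l1_split[OF i, of u v] by simp
    then obtain p where p: "grid_walk ns p w v" "length p = Suc k"
      using Suc.IH w v by blast
    show "\<exists>p. grid_walk ns p u v \<and> length p = Suc (Suc k)"
      using walk_Cons[OF p(1) adj] p(2) by (intro exI[of _ "u # p"]) simp
  qed
qed

lemma grid_dist_l1:
  assumes "u \<in> grid_vertices ns" "v \<in> grid_vertices ns"
  shows "grid_dist ns u v = l1 ns u v"
  unfolding grid_dist_def
proof (rule Least_equality)
  show "\<exists>p. grid_walk ns p u v \<and> length p = Suc (l1 ns u v)"
    using walk_upper assms by blast
next
  fix k assume "\<exists>p. grid_walk ns p u v \<and> length p = Suc k"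
  then show "l1 ns u v \<le> k" using walk_lower by fastforce
qed

lemma ad_nat_abs: "ad i j = nat \<bar>int i - int j\<bar>"
  unfolding ad_def by arith

definition absd :: "nat list \<Rightarrow> nat list \<Rightarrow> nat list" where
  "absd u v = map2 ad u v"

lemma sum_list_absd:
  "length u = length v \<Longrightarrow> sum_list (absd u v) = (\<Sum>i<length u. ad (u ! i) (v ! i))"
proof (induction u arbitrary: v)
  case Nil
  then show ?case by (simp add: absd_def)
next
  case (Cons a u)
  then obtain b v' where v: "v = b # v'" and l: "length u = length v'"
    by (cases v) auto
  have "sum_list (absd (a # u) v) = ad a b + sum_list (absd u v')"
    by (simp add: absd_def v)
  also have "\<dots> = ad a b + (\<Sum>i<length u. ad (u ! i) (v' ! i))" using Cons.IH[OF l] by simp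
  also have "\<dots> = (\<Sum>i<length (a # u). ad ((a # u) ! i) (v ! i))"
    by (simp only: v length_Cons sum.lessThan_Suc_shift) simp
  finally show ?case .
qed

lemma sig_block:
  assumes "i < prod_list ns" "prod_list ns > 0"
  shows "sig (n # ns) (a * prod_list ns + i) = a # sig ns i"
  using assms by simp

lemma bt:
  "ns \<noteq> [] \<Longrightarrow> \<forall>i<length ns. ns ! i \<ge> 1 \<Longrightarrow>
   \<forall>M. (\<forall>i<prod_list ns. \<forall>j<prod_list ns. M i j = F (absd (sig ns i) (sig ns j))) \<longrightarrow>
     block_toeplitz (length ns) (prod_list ns) M"
proof (induction ns arbitrary: F)
  case Nil
  then show ?case by simp
next
  case (Cons n ns)
  show ?case
  proof (cases "ns = []")
    case True
    show ?thesis
    proof (intro allI impI)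
      fix M :: "nat \<Rightarrow> nat \<Rightarrow> real"
      assume M: "\<forall>i<prod_list (n # ns). \<forall>j<prod_list (n # ns). M i j = F (absd (sig (n # ns) i) (sig (n # ns) j))"
      have "\<forall>i<n. \<forall>j<n. M i j = (\<lambda>k. F [nat \<bar>k\<bar>]) (int i - int j)"
        using M True by (auto simp: absd_def ad_nat_abs)
      then have "toeplitz n M" unfolding toeplitz_def by (rule exI[of _ "\<lambda>k. F [nat \<bar>k\<bar>]"])
      then show "block_toeplitz (length (n # ns)) (prod_list (n # ns)) M"
        using True by simp
    qed
  next
    case False
    then obtain d where d: "length ns = Suc d" by (cases ns) auto
    have h: "\<forall>i<length ns. ns ! i \<ge> 1" using Cons.prems by auto
    define s where "s = prod_list ns"
    have s0: "s > 0" using prod_list_pos[OF h] s_def by simp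
    show ?thesis
    proof (intro allI impI)
      fix M :: "nat \<Rightarrow> nat \<Rightarrow> real"
      assume M: "\<forall>i<prod_list (n # ns). \<forall>j<prod_list (n # ns). M i j = F (absd (sig (n # ns) i) (sig (n # ns) j))"
      define A where "A = (\<lambda>k i j. F (k # absd (sig ns i) (sig ns j)))"
      have A: "\<forall>k<n. block_toeplitz (Suc d) s (A k)"
      proof (intro allI impI)
        fix k assume "k < n"
        have "block_toeplitz (length ns) (prod_list ns) (A k)"
          by (rule mp[OF spec[OF Cons.IH[OF False h, of "\<lambda>l. F (k # l)"]]]) (simp add: A_def)
        then show "block_toeplitz (Suc d) s (A k)" by (simp add: d s_def)
      qed
      have E: "\<forall>a<n. \<forall>b<n. ad a b < n \<and>
           (\<forall>i<s. \<forall>j<s. M (a * s + i) (b * s + j) = A (ad a b) i j)"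
      proof (intro allI impI conjI)
        fix a b assume a: "a < n" and b: "b < n"
        then show "ad a b < n" by (auto simp: ad_def)
        fix i j assume i: "i < s" and j: "j < s"
        have lt: "x * s + y < n * s" if "x < n" "y < s" for x y
        proof -
          have "x * s + y < (x + 1) * s" using that by simp
          also have "\<dots> \<le> n * s" using that by (intro mult_right_mono) auto
          finally show ?thesis .
        qed
        have "M (a * s + i) (b * s + j) = F (absd (sig (n # ns) (a * s + i)) (sig (n # ns) (b * s + j)))"
          using M lt[OF a i] lt[OF b j] by (simp add: s_def)
        also have "\<dots> = F (absd (a # sig ns i) (b # sig ns j))"
          using sig_block[of i ns n a] sig_block[of j ns n b] i j s0 by (simp add: s_def)
        also have "\<dots> = A (ad a b) i j" by (simp add: A_def absd_def)
        finally show "M (a * s + i) (b * s + j) = A (ad a b) i j" .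
      qed
      have T: "toeplitz n ad"
        unfolding toeplitz_def by (intro exI[of _ "\<lambda>k. nat \<bar>k\<bar>"]) (auto simp: ad_def)
      show "block_toeplitz (length (n # ns)) (prod_list (n # ns)) M"
      proof -
        have L: "length (n # ns) = Suc (Suc d)" using d by simp
        have P: "prod_list (n # ns) = n * s" by (simp add: s_def)
        show ?thesis unfolding L P block_toeplitz.simps
          apply (rule exI[of _ n], rule exI[of _ s], rule exI[of _ n], rule exI[of _ A], rule exI[of _ ad])
          using A E T by blast
      qed
    qed
  qed
qed

theorem lemma3p3:
  fixes ns :: "nat list" and f :: "nat \<Rightarrow> real"
  assumes "length ns \<ge> 1"
    and "\<forall>i<length ns. ns ! i \<ge> 1"
  shows "\<exists>\<sigma> :: nat \<Rightarrow> nat list.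
           bij_betw \<sigma> {..<prod_list ns} (grid_vertices ns) \<and>
           block_toeplitz (length ns) (prod_list ns)
             (\<lambda>i j. f (grid_dist ns (\<sigma> i) (\<sigma> j)))"
proof (intro exI conjI)
  have B: "bij_betw (sig ns) {..<prod_list ns} (grid_vertices ns)" using sig_bij assms(2) by blast
  then show "bij_betw (sig ns) {..<prod_list ns} (grid_vertices ns)" .
  have ne: "ns \<noteq> []" using assms(1) by auto
  have X: "\<forall>i<prod_list ns. \<forall>j<prod_list ns.
          f (grid_dist ns (sig ns i) (sig ns j)) = (\<lambda>l. f (sum_list l)) (absd (sig ns i) (sig ns j))"
  proof (intro allI impI)
    fix i j assume i: "i < prod_list ns" and j: "j < prod_list ns"
    have gi: "sig ns i \<in> grid_vertices ns" using bij_betw_apply[OF B] i by simp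
    have gj: "sig ns j \<in> grid_vertices ns" using bij_betw_apply[OF B] j by simp
    have li: "length (sig ns i) = length ns" using gi by (simp add: grid_vertices_def)
    have lj: "length (sig ns j) = length ns" using gj by (simp add: grid_vertices_def)
    have "grid_dist ns (sig ns i) (sig ns j) = l1 ns (sig ns i) (sig ns j)"
      by (rule grid_dist_l1[OF gi gj])
    also have "\<dots> = sum_list (absd (sig ns i) (sig ns j))"
      unfolding l1_def using sum_list_absd[of "sig ns i" "sig ns j"] li lj by simp
    finally show "f (grid_dist ns (sig ns i) (sig ns j)) = (\<lambda>l. f (sum_list l)) (absd (sig ns i) (sig ns j))"
      by simp
  qed
  show "block_toeplitz (length ns) (prod_list ns) (\<lambda>i j. f (grid_dist ns (sig ns i) (sig ns j)))"
    by (rule mp[OF spec[OF bt[OF ne assms(2), of "\<lambda>l. f (sum_list l)"]] X])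
qed

end
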